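(* For every integer $k\ge1$, $N(2k+5,k)=1$.
   Context: For $n>k\ge1$, $N(n,k)$ is the nullity of the $n\times n$ skew-symmetric Toeplitz matrix $A(n,k)$ whose first $k$ superdiagonals have all entries $1$ and whose remaining superdiagonals have all entries $0$. *)

theory Defs
  imports "Jordan_Normal_Form.Matrix_Kernel"
begin

definition A_mat :: "nat \<Rightarrow> nat \<Rightarrow> real mat" where
  "A_mat n k = mat n n (\<lambda>(i, j).
      if i < j \<and> j - i \<le> k then 1
      else if j < i \<and> i - j \<le> k then -1
      else 0)"

definition N_null :: "nat \<Rightarrow> nat \<Rightarrow> nat" where
  "N_null n k = kernel_dim (A_mat n k)"

end

theory Submission imports Defs begin

lemma core_big:
  fixes Q :: "nat \<Rightarrow> real" and k :: nat
  assumes k: "k \<ge> 3" and Q0: "Q 0 = 0" and Qn: "\<forall>m \<ge> 2*k+5. Q m = Q (2*k+5)"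
  and E: "\<forall>i < 2*k+5. Q (i+k+1) - Q (i+1) - Q i + Q (i-k) = 0"
  and phi: "Q 1 + Q 3 = 0"
  shows "\<forall>m \<le> 2*k+5. Q m = 0"
proof -
  define T where "T = Q (2*k+5)"
  have F1: "Q (k+1+i) = Q (i+1) + Q i" if "i \<le> k" for i
  proof -
    have "i - k = 0" using that by simp
    moreover have "Q (i + k + 1) = Q (k + 1 + i)" by (simp add: add.commute)
    ultimately show ?thesis using E[rule_format, of i] that Q0 by simp
  qed
  have F2: "Q j = Q (j+k+1) + Q (j+k) - T" if "4 \<le> j" "j \<le> k+4" for j
  proof -
    have "j+k+k+1 \<ge> 2*k+5" using that by simp
    hence "Q (j+k+k+1) = T" using Qn unfolding T_def by blast
    moreover have "j + k - k = j" by simp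
    moreover have "j+k < 2*k+5" using that by simp
    moreover have "Q (j+k+k+1) - Q (j+k+1) - Q (j+k) + Q (j+k-k) = 0" using E \<open>j+k < 2*k+5\<close> by blast
    ultimately show ?thesis by simp
  qed
  have M: "Q (i+k+1) - Q (i+1) - Q i + Q (i-k) = 0" if "i < 2*k+5" for i
    using E that by auto
  have a1: "Q (k+1) = Q 1" using F1[of 0] Q0 by simp
  have a2: "Q (k+2) = Q 2 + Q 1" using F1[of 1] k by (simp add: numeral_eq_Suc)
  have a3: "Q (k+3) = Q 3 + Q 2" using F1[of 2] k by (simp add: numeral_eq_Suc)
  have a4: "Q (k+4) = Q 4 + Q 3" using F1[of 3] k by (simp add: numeral_eq_Suc)
  have a5: "Q (2*k+1) = Q (k+1) + Q k" using F1[of k] by (simp add: numeral_eq_Suc algebra_simps)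
  have b1: "Q (k+1) = Q (2*k+2) + Q (2*k+1) - T" using F2[of "k+1"] k by (simp add: numeral_eq_Suc algebra_simps)
  have b2: "Q (k+2) = Q (2*k+3) + Q (2*k+2) - T" using F2[of "k+2"] k by (simp add: numeral_eq_Suc algebra_simps)
  have b3: "Q (k+3) = Q (2*k+4) + Q (2*k+3) - T" using F2[of "k+3"] k by (simp add: numeral_eq_Suc algebra_simps)
  have b4: "Q (k+4) = T + Q (2*k+4) - T" using F2[of "k+4"] k unfolding T_def by (simp add: numeral_eq_Suc algebra_simps)
  have c1: "Q (2*k+2) - Q (k+2) - Q (k+1) + Q 1 = 0" using M[of "k+1"] by (simp add: numeral_eq_Suc algebra_simps)
  have c2: "Q (2*k+3) - Q (k+3) - Q (k+2) + Q 2 = 0" using M[of "k+2"] by (simp add: numeral_eq_Suc algebra_simps)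
  have c3: "Q (2*k+4) - Q (k+4) - Q (k+3) + Q 3 = 0" using M[of "k+3"] by (simp add: numeral_eq_Suc algebra_simps)
  have q2: "Q 2 = 0" and q4: "Q 4 = 0" and qk: "Q k = Q 3" and T0: "T = 0"
    using a1 a2 a3 a4 a5 b1 b2 b3 b4 c1 c2 c3 phi by linarith+
  define t where "t = Q 3"
  have R: "Q (j-1) + Q j + Q (j+1) = 0" if "4 \<le> j" "j \<le> k" for j
  proof -
    have "Q (k+1+(j-1)) = Q j + Q (j-1)" using F1[of "j-1"] that by simp
    moreover have "k+1+(j-1) = j+k" using that by simp
    ultimately have x: "Q (j+k) = Q j + Q (j-1)" by (simp add: add.commute)
    have y: "Q (j+k+1) = Q (j+1) + Q j" using F1[of j] that by (simp add: algebra_simps)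
    show ?thesis using F2[of j] that x y T0 by simp
  qed
  have P: "(3*q+3 \<le> k+1 \<longrightarrow> Q (3*q+3) = t) \<and> (3*q+4 \<le> k+1 \<longrightarrow> Q (3*q+4) = 0)
        \<and> (3*q+5 \<le> k+1 \<longrightarrow> Q (3*q+5) = -t)" for q
  proof (induction q)
    case 0
    have "5 \<le> k+1 \<Longrightarrow> Q 5 = -t" using R[of 4] q4 unfolding t_def by simp
    then show ?case using q4 t_def by simp
  next
    case (Suc q)
    have r1: "3*q+6 \<le> k+1 \<Longrightarrow> Q (3*q+4) + Q (3*q+5) + Q (3*q+6) = 0"
      using R[of "3*q+5"] by (simp add: add.commute)
    have r2: "3*q+7 \<le> k+1 \<Longrightarrow> Q (3*q+5) + Q (3*q+6) + Q (3*q+7) = 0"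
      using R[of "3*q+6"] by (simp add: add.commute)
    have r3: "3*q+8 \<le> k+1 \<Longrightarrow> Q (3*q+6) + Q (3*q+7) + Q (3*q+8) = 0"
      using R[of "3*q+7"] by (simp add: add.commute)
    have e1: "3*q+6 \<le> k+1 \<Longrightarrow> Q (3*q+6) = t" using Suc r1 by auto
    have e2: "3*q+7 \<le> k+1 \<Longrightarrow> Q (3*q+7) = 0" using Suc r2 e1 by auto
    have e3: "3*q+8 \<le> k+1 \<Longrightarrow> Q (3*q+8) = -t" using Suc r3 e1 e2 by auto
    show ?case using e1 e2 e3 by (simp add: algebra_simps)
  qed
  have t0: "t = 0"
  proof -
    define q r where "q = k div 3" "r = k mod 3"
    hence qr: "k = 3*q + r" "r < 3" by auto
    have q1: "q \<ge> 1" using qr k by auto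
    then obtain p where p: "q = Suc p" by (cases q) auto
    consider "r = 0" | "r = 1" | "r = 2" using qr by linarith
    then show ?thesis
    proof cases
      case 1
      have "Q (3*p+4) = 0" using P[of p] qr p 1 by auto
      moreover have "3*p+4 = k+1" using qr p 1 by simp
      ultimately show ?thesis using a1 phi t_def by simp
    next
      case 2
      have "Q (3*p+4) = 0" using P[of p] qr p 2 by auto
      moreover have "3*p+4 = k" using qr p 2 by simp
      ultimately show ?thesis using qk t_def by simp
    next
      case 3
      have "Q (3*p+5) = -t" using P[of p] qr p 3 by auto
      moreover have "3*p+5 = k" using qr p 3 by simp
      ultimately show ?thesis using qk t_def by simp
    qed
  qed
  have low: "Q m = 0" if "m \<le> k+1" for m
  proof -
    consider "m \<le> 2" | "m \<ge> 3" by linarith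
    then show ?thesis
    proof cases
      case 1
      then have "m = 0 \<or> m = 1 \<or> m = 2" by auto
      then show ?thesis using Q0 q2 phi t_def t0 by auto
    next
      case 2
      define q r where "q = (m-3) div 3" "r = (m-3) mod 3"
      hence qr: "m - 3 = 3*q + r" "r < 3" by auto
      have mq: "m = 3*q+3+r" using qr 2 by simp
      have "r = 0 \<or> r = 1 \<or> r = 2" using qr by auto
      moreover have "3*q+3+r \<le> k+1" using mq that by simp
      ultimately show ?thesis using P[of q] t0 mq by (auto simp: add.commute)
    qed
  qed
  have mid: "Q m = 0" if "k+1 < m" "m \<le> 2*k+1" for m
  proof -
    have "Q (k+1+(m-k-1)) = Q (m-k-1+1) + Q (m-k-1)" using F1[of "m-k-1"] that by simp
    moreover have "k+1+(m-k-1) = m" using that by simp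
    ultimately show ?thesis using low[of "m-k-1+1"] low[of "m-k-1"] that by simp
  qed
  have hi: "Q (2*k+2) = 0" "Q (2*k+3) = 0" "Q (2*k+4) = 0"
    using a1 a2 a3 a4 a5 b1 b2 b3 b4 c1 c2 c3 phi T0 q2 q4 qk t0 t_def by linarith+
  show ?thesis
  proof (intro allI impI)
    fix m assume "m \<le> 2*k+5"
    then consider "m \<le> k+1" | "k+1 < m \<and> m \<le> 2*k+1" | "m = 2*k+2" | "m = 2*k+3" | "m = 2*k+4" | "m = 2*k+5"
      by linarith
    then show "Q m = 0" using low mid hi T0 T_def by cases auto
  qed
qed

lemma core_k1:
  fixes Q :: "nat \<Rightarrow> real"
  assumes Q0: "Q 0 = 0" and Qn: "\<forall>m \<ge> 2*1+5. Q m = Q (2*1+5)"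
  and E: "\<forall>i < 2*1+5. Q (i+1+1) - Q (i+1) - Q i + Q (i-1) = 0"
  and phi: "Q 1 + Q 3 = 0"
  shows "\<forall>m \<le> 2*1+5. Q m = 0"
proof -
  have e: "Q (i+2) - Q (i+1) - Q i + Q (i-1) = 0" if "i < 7" for i
  proof -
    have "i < 2*1+5" using that by simp
    from E[rule_format, OF this] show ?thesis by (simp add: numeral_eq_Suc)
  qed
  have q8: "Q 8 = Q 7" using Qn[rule_format, of 8] by simp
  have e0: "Q 2 - Q 1 = 0" using e[of 0] Q0 by (simp add: numeral_eq_Suc)
  have e1: "Q 3 - Q 2 - Q 1 = 0" using e[of 1] Q0 by (simp add: numeral_eq_Suc)
  have e2: "Q 4 - Q 3 - Q 2 + Q 1 = 0" using e[of 2] by (simp add: numeral_eq_Suc)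
  have e3: "Q 5 - Q 4 - Q 3 + Q 2 = 0" using e[of 3] by (simp add: numeral_eq_Suc)
  have e4: "Q 6 - Q 5 - Q 4 + Q 3 = 0" using e[of 4] by (simp add: numeral_eq_Suc)
  have e5: "Q 7 - Q 6 - Q 5 + Q 4 = 0" using e[of 5] by (simp add: numeral_eq_Suc)
  have e6: "Q 8 - Q 7 - Q 6 + Q 5 = 0" using e[of 6] by (simp add: numeral_eq_Suc)
  have z: "Q 1 = 0" "Q 2 = 0" "Q 3 = 0" "Q 4 = 0" "Q 5 = 0" "Q 6 = 0" "Q 7 = 0"
    using e0 e1 e2 e3 e4 e5 e6 q8 phi by linarith+
  show ?thesis
  proof (intro allI impI)
    fix m :: nat assume "m \<le> 2*1+5"
    then have "m = 0 \<or> m = 1 \<or> m = 2 \<or> m = 3 \<or> m = 4 \<or> m = 5 \<or> m = 6 \<or> m = 7" by auto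
    then show "Q m = 0" using z Q0 by auto
  qed
qed

lemma core_k2:
  fixes Q :: "nat \<Rightarrow> real"
  assumes Q0: "Q 0 = 0" and Qn: "\<forall>m \<ge> 2*2+5. Q m = Q (2*2+5)"
  and E: "\<forall>i < 2*2+5. Q (i+2+1) - Q (i+1) - Q i + Q (i-2) = 0"
  and phi: "Q 1 + Q 3 = 0"
  shows "\<forall>m \<le> 2*2+5. Q m = 0"
proof -
  have e: "Q (i+3) - Q (i+1) - Q i + Q (i-2) = 0" if "i < 9" for i
  proof -
    have "i < 2*2+5" using that by simp
    from E[rule_format, OF this] show ?thesis by (simp add: numeral_eq_Suc)
  qed
  have q10: "Q 10 = Q 9" using Qn[rule_format, of 10] by simp
  have q11: "Q 11 = Q 9" using Qn[rule_format, of 11] by simp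
  have e0: "Q 3 - Q 1 = 0" using e[of 0] Q0 by (simp add: numeral_eq_Suc)
  have e1: "Q 4 - Q 2 - Q 1 = 0" using e[of 1] Q0 by (simp add: numeral_eq_Suc)
  have e2: "Q 5 - Q 3 - Q 2 = 0" using e[of 2] Q0 by (simp add: numeral_eq_Suc)
  have e3: "Q 6 - Q 4 - Q 3 + Q 1 = 0" using e[of 3] by (simp add: numeral_eq_Suc)
  have e4: "Q 7 - Q 5 - Q 4 + Q 2 = 0" using e[of 4] by (simp add: numeral_eq_Suc)
  have e5: "Q 8 - Q 6 - Q 5 + Q 3 = 0" using e[of 5] by (simp add: numeral_eq_Suc)
  have e6: "Q 9 - Q 7 - Q 6 + Q 4 = 0" using e[of 6] by (simp add: numeral_eq_Suc)
  have e7: "Q 10 - Q 8 - Q 7 + Q 5 = 0" using e[of 7] by (simp add: numeral_eq_Suc)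
  have e8: "Q 11 - Q 9 - Q 8 + Q 6 = 0" using e[of 8] by (simp add: numeral_eq_Suc)
  have z: "Q 1 = 0" "Q 2 = 0" "Q 3 = 0" "Q 4 = 0" "Q 5 = 0" "Q 6 = 0" "Q 7 = 0" "Q 8 = 0" "Q 9 = 0"
    using e0 e1 e2 e3 e4 e5 e6 e7 e8 q10 q11 phi by linarith+
  show ?thesis
  proof (intro allI impI)
    fix m :: nat assume "m \<le> 2*2+5"
    then have "m = 0 \<or> m = 1 \<or> m = 2 \<or> m = 3 \<or> m = 4 \<or> m = 5 \<or> m = 6 \<or> m = 7 \<or> m = 8 \<or> m = 9" by auto
    then show "Q m = 0" using z Q0 by auto
  qed
qed

lemma core_all:
  fixes Q :: "nat \<Rightarrow> real" and k :: nat
  assumes k: "k \<ge> 1" and Q0: "Q 0 = 0" and Qn: "\<forall>m \<ge> 2*k+5. Q m = Q (2*k+5)"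
  and E: "\<forall>i < 2*k+5. Q (i+k+1) - Q (i+1) - Q i + Q (i-k) = 0"
  and phi: "Q 1 + Q 3 = 0"
  shows "\<forall>m \<le> 2*k+5. Q m = 0"
proof -
  consider "k = 1" | "k = 2" | "k \<ge> 3" using k by linarith
  then show ?thesis
  proof cases
    case 1 show ?thesis unfolding 1 by (rule core_k1[OF Q0 Qn[unfolded 1] E[unfolded 1] phi])
  next
    case 2 show ?thesis unfolding 2 by (rule core_k2[OF Q0 Qn[unfolded 2] E[unfolded 2] phi])
  next
    case 3 then show ?thesis using core_big[OF 3 Q0 Qn E phi] by simp
  qed
qed



lemma A_carrier: "A_mat n k \<in> carrier_mat n n"
  unfolding A_mat_def by simp

lemma A_entry:
  assumes "i < n" "j < n"
  shows "A_mat n k $$ (i,j) = (of_bool (j < i+k+1) - of_bool (j < i+1) - of_bool (j < i) + of_bool (j < i-k) :: real)"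
  using assms unfolding A_mat_def by auto

lemma row_eq:
  assumes i: "i < n" and x: "x \<in> carrier_vec n"
  shows "(A_mat n k *\<^sub>v x) $ i =
     (\<Sum>j<n. if j < i+k+1 then x$j else 0) - (\<Sum>j<n. if j < i+1 then x$j else 0)
     - (\<Sum>j<n. if j < i then x$j else 0) + (\<Sum>j<n. if j < i-k then x$j else 0)"
proof -
  have "(A_mat n k *\<^sub>v x) $ i = (\<Sum>j\<in>{0..<n}. A_mat n k $$ (i,j) * x $ j)"
    using i x A_carrier[of n k] by (simp add: scalar_prod_def)
  also have "\<dots> = (\<Sum>j<n. (if j < i+k+1 then x$j else 0) - (if j < i+1 then x$j else 0)
     - (if j < i then x$j else 0) + (if j < i-k then x$j else 0))"
    by (rule sum.cong) (auto simp: A_entry[OF i] algebra_simps lessThan_atLeast0)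
  also have "\<dots> = (\<Sum>j<n. if j < i+k+1 then x$j else 0) - (\<Sum>j<n. if j < i+1 then x$j else 0)
     - (\<Sum>j<n. if j < i then x$j else 0) + (\<Sum>j<n. if j < i-k then x$j else 0)"
    by (simp add: sum.distrib sum_subtractf)
  finally show ?thesis .
qed

lemma kernel_zero:
  fixes k :: nat and x :: "real vec"
  assumes k: "k \<ge> 1" and x: "x \<in> carrier_vec (2*k+5)"
  and Ax: "A_mat (2*k+5) k *\<^sub>v x = 0\<^sub>v (2*k+5)"
  and phi: "2 * x$0 + x$1 + x$2 = 0"
  shows "x = 0\<^sub>v (2*k+5)"
proof -
  define n where "n = 2*k+5"
  define Q where "Q m = (\<Sum>j<n. if j < m then x$j else 0)" for m
  have Q0: "Q 0 = 0" unfolding Q_def by simp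
  have Qge: "Q m = Q n" if "m \<ge> n" for m
    unfolding Q_def by (rule sum.cong[OF refl]) (use that in simp)
  have Qn: "\<forall>m \<ge> 2*k+5. Q m = Q (2*k+5)" using Qge[unfolded n_def] by blast
  have E: "\<forall>i < 2*k+5. Q (i+k+1) - Q (i+1) - Q i + Q (i-k) = 0"
  proof (intro allI impI)
    fix i assume i: "i < 2*k+5"
    have "(A_mat n k *\<^sub>v x) $ i = 0" using Ax i n_def by simp
    then show "Q (i+k+1) - Q (i+1) - Q i + Q (i-k) = 0"
      using row_eq[of i n x k] i x n_def unfolding Q_def by simp
  qed
  have Qsuc: "Q (Suc m) = Q m + x$m" if "m < n" for m
  proof -
    have "Q (Suc m) = (\<Sum>j<n. (if j < m then x$j else 0) + (if j = m then x$j else 0))"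
      unfolding Q_def by (intro sum.cong) auto
    also have "\<dots> = Q m + (\<Sum>j<n. if j = m then x$j else 0)"
      unfolding Q_def by (simp only: sum.distrib)
    also have "(\<Sum>j<n. if j = m then x$j else 0) = x$m" using that by (simp add: sum.delta)
    finally show ?thesis .
  qed
  have n3: "3 < n" using n_def by simp
  have "Q 1 = x$0" using Qsuc[of 0] Q0 n3 by simp
  moreover have "Q 3 = x$0 + x$1 + x$2" using Qsuc[of 0] Qsuc[of 1] Qsuc[of 2] Q0 n3
    by (simp add: numeral_eq_Suc)
  ultimately have ph: "Q 1 + Q 3 = 0" using phi by simp
  have z: "\<forall>m \<le> 2*k+5. Q m = 0" by (rule core_all[OF k Q0 Qn E ph])
  show ?thesis
  proof (rule eq_vecI)
    fix j assume "j < dim_vec (0\<^sub>v (2*k+5) :: real vec)"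
    then have j: "j < n" using n_def by simp
    then have "x$j = Q (Suc j) - Q j" using Qsuc[OF j] by simp
    also have "\<dots> = 0" using z j n_def by simp
    finally show "x $ j = 0\<^sub>v (2*k+5) $ j" using j n_def by simp
  next
    show "dim_vec x = dim_vec (0\<^sub>v (2*k+5) :: real vec)" using x by simp
  qed
qed


lemma A_transpose: "transpose_mat (A_mat n k) = (-1) \<cdot>\<^sub>m A_mat n k"
  by (rule eq_matI) (auto simp: A_mat_def)

lemma A_det: assumes "odd n" shows "det (A_mat n k) = 0"
proof -
  have "det (A_mat n k) = det (transpose_mat (A_mat n k))"
    using det_transpose[OF A_carrier] by simp
  also have "\<dots> = (-1)^n * det (A_mat n k)" unfolding A_transpose using A_carrier[of n k] by simp
  also have "\<dots> = - det (A_mat n k)" using assms by simp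
  finally show ?thesis by simp
qed

theorem theorem8p5:
  fixes k :: nat
  assumes "k \<ge> 1"
  shows "N_null (2 * k + 5) k = 1"
proof -
  define n where "n = 2*k+5"
  define A where "A = A_mat n k"
  have Ac: "A \<in> carrier_mat n n" unfolding A_def by (rule A_carrier)
  interpret kernel n n A by (unfold_locales, rule Ac)
  have "det A = 0" unfolding A_def by (rule A_det) (simp add: n_def)
  then obtain v where v: "v \<in> carrier_vec n" "v \<noteq> 0\<^sub>v n" "A *\<^sub>v v = 0\<^sub>v n"
    using det_0_iff_vec_prod_zero[OF Ac] by auto
  define phi where "phi w = 2 * w$0 + w$1 + w$2" for w :: "real vec"
  have phiv: "phi v \<noteq> 0"
    using kernel_zero[OF assms, of v] v unfolding phi_def A_def n_def by auto
  have vK: "v \<in> mat_kernel A" using v Ac by (intro mat_kernelI) auto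
  have gen: "span {v} = mat_kernel A"
  proof
    show "span {v} \<subseteq> mat_kernel A" using vK by (intro Ker.span_is_subset2) auto
  next
    show "mat_kernel A \<subseteq> span {v}"
    proof
      fix x assume xK: "x \<in> mat_kernel A"
      define c where "c = phi x / phi v"
      define y where "y = x - c \<cdot>\<^sub>v v"
      have x: "x \<in> carrier_vec n" "A *\<^sub>v x = 0\<^sub>v n" using mat_kernelD[OF Ac xK] by auto
      have y: "y \<in> carrier_vec n" unfolding y_def using x v by simp
      have "A *\<^sub>v y = A *\<^sub>v x - c \<cdot>\<^sub>v (A *\<^sub>v v)"
        unfolding y_def using Ac x v by (simp add: mult_minus_distrib_mat_vec mult_mat_vec)
      then have Ay: "A *\<^sub>v y = 0\<^sub>v n" using x v by simp
      have "phi y = phi x - c * phi v" unfolding y_def phi_def using x v n_def by (simp add: algebra_simps)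
      then have "phi y = 0" unfolding c_def using phiv by simp
      then have "y = 0\<^sub>v n" using kernel_zero[OF assms, of y] y Ay unfolding phi_def A_def n_def by auto
      then have x0: "x - c \<cdot>\<^sub>v v = 0\<^sub>v n" unfolding y_def .
      have "x = c \<cdot>\<^sub>v v"
      proof (rule eq_vecI)
        fix i assume "i < dim_vec (c \<cdot>\<^sub>v v)"
        then have i: "i < n" using v by simp
        have "(x - c \<cdot>\<^sub>v v) $ i = 0" using x0 i by simp
        then show "x $ i = (c \<cdot>\<^sub>v v) $ i" using i x v by simp
      next
        show "dim_vec x = dim_vec (c \<cdot>\<^sub>v v)" using x v by simp
      qed
      moreover have "c \<cdot>\<^sub>v v \<in> span {v}"
        using submodule.smult_closed[OF Ker.span_is_submodule, of "{v}" c v] Ker.span_self[of v] vK by auto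
      ultimately show "x \<in> span {v}" by simp
    qed
  qed
  have "dim = 1" by (rule Ker.dim1I) (use gen v vK in auto)
  moreover have "kernel_dim A = dim" by (rule kernel_dim)
  ultimately show ?thesis unfolding N_null_def A_def n_def by simp
qed

end
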